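(* Let $N\ge2$, $\mathrm{G}=\mathrm{SL}_N(\mathbb{R})$, $\mathrm{K}=\mathrm{SO}_N(\mathbb{R})$, and let $\mathscr{I}_0=\{I_1,\dots,I_{k_0}\}$ be a partition of $\{1,\dots,N\}$ into nonempty consecutive blocks. Let $G_{\mathrm{hor}}:=\{g\in\mathrm{G}: g\,\mathrm{U}_{\mathscr{I}_0}\mathrm{K}/\mathrm{K}=\mathrm{U}_{\mathscr{I}_0}\mathrm{K}/\mathrm{K}\}$ be the stabilizer in $\mathrm{G}$ of the horocycle $\mathrm{U}_{\mathscr{I}_0}\mathrm{K}/\mathrm{K}\subset\mathrm{G}/\mathrm{K}$. Then $G_{\mathrm{hor}}=N_{\mathrm{K}}(\mathrm{U}_{\mathscr{I}_0})\cdot\mathrm{U}_{\mathscr{I}_0}$, where $N_{\mathrm{K}}(\mathrm{U}_{\mathscr{I}_0})$ is the normalizer of $\mathrm{U}_{\mathscr{I}_0}$ in $\mathrm{K}$, and hence the identity component is $G_{\mathrm{hor}}^\circ=\mathrm{K}_{\mathscr{I}_0}\cdot\mathrm{U}_{\mathscr{I}_0}$.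
   Context: Consecutive blocks: $i_1<i_2$ whenever $i_1\in I_{k_1}$, $i_2\in I_{k_2}$, $k_1<k_2$. $\mathbb{R}^I$ is the span of $e_i$, $i\in I$. $\mathrm{U}_{\mathscr{I}_0}:=\{g\in\mathrm{G}:(\mathrm{id}-g)\mathbb{R}^{I_k}\subset\mathbb{R}^{I_1\cup\dots\cup I_{k-1}}\ \forall k\}$; $\mathrm{K}_{\mathscr{I}_0}$ is the group of block-diagonal matrices (blocks $I_k$) with each block in $\mathrm{SO}_{|I_k|}(\mathbb{R})$. *)

theory Defs
  imports "HOL-Analysis.Analysis" "HOL-Library.Disjoint_Sets"
begin

text \<open>Matrices in real^'n^'n act on column vectors; 'n is a finite linearly ordered
index type playing the role of {1,...,N}.\<close>

definition SLN :: "(real^'n^'n) set" where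
  "SLN = {g. det g = 1}"

definition SON :: "(real^'n^'n) set" where
  "SON = {g. orthogonal_matrix g \<and> det g = 1}"

definition coordspace :: "'n set \<Rightarrow> (real^'n) set" where
  "coordspace I = span ((\<lambda>i. axis i 1) ` I)"

definition block_before :: "('n::linorder) set \<Rightarrow> 'n set \<Rightarrow> bool" where
  "block_before J I \<longleftrightarrow> (\<forall>j\<in>J. \<forall>i\<in>I. j < i)"

definition consecutive_partition :: "('n::{finite,linorder}) set set \<Rightarrow> bool" where
  "consecutive_partition P \<longleftrightarrow> partition_on UNIV P \<and>
     (\<forall>I\<in>P. \<forall>J\<in>P. I \<noteq> J \<longrightarrow> block_before I J \<or> block_before J I)"

definition U_part :: "('n::{finite,linorder}) set set \<Rightarrow> ((real, 'n) vec, 'n) vec set" where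
  "U_part P = {g \<in> SLN. \<forall>I\<in>P.
      (\<lambda>x. x - g *v x) ` coordspace I \<subseteq> coordspace (\<Union>{J\<in>P. block_before J I})}"

definition block_det :: "real^'n^'n \<Rightarrow> 'n set \<Rightarrow> real" where
  "block_det g I = (\<Sum>p | p permutes I. of_int (sign p) * (\<Prod>i\<in>I. g $ i $ p i))"

definition block_orthogonal :: "real^'n^'n \<Rightarrow> 'n set \<Rightarrow> bool" where
  "block_orthogonal g I \<longleftrightarrow>
     (\<forall>i\<in>I. \<forall>j\<in>I. (\<Sum>l\<in>I. g $ l $ i * g $ l $ j) = (if i = j then 1 else 0))"

definition K_part :: "('n::{finite,linorder}) set set \<Rightarrow> ((real, 'n) vec, 'n) vec set" where
  "K_part P = {g. (\<forall>i j. g $ i $ j \<noteq> 0 \<longrightarrow> (\<exists>I\<in>P. i \<in> I \<and> j \<in> I)) \<and>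
      (\<forall>I\<in>P. block_orthogonal g I \<and> block_det g I = 1)}"

text \<open>Points of G/K are left cosets gK.\<close>
definition lcosetK :: "real^'n^'n \<Rightarrow> (real^'n^'n) set" where
  "lcosetK g = (\<lambda>k. g ** k) ` SON"

definition G_hor :: "('n::{finite,linorder}) set set \<Rightarrow> ((real, 'n) vec, 'n) vec set" where
  "G_hor P = {g \<in> SLN. (\<lambda>h. lcosetK (g ** h)) ` U_part P = lcosetK ` U_part P}"

definition normalizer_K :: "(real^'n^'n) set \<Rightarrow> (real^'n^'n) set" where
  "normalizer_K H = {k \<in> SON. (\<lambda>u. k ** u ** matrix_inv k) ` H = H}"

definition setmul :: "(real^'n^'n) set \<Rightarrow> (real^'n^'n) set \<Rightarrow> (real^'n^'n) set" where
  "setmul A B = {a ** b | a b. a \<in> A \<and> b \<in> B}"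

end

theory Submission
  imports Defs
begin


type_synonym 'a rmat = "((real,'a) vec,'a) vec"
type_synonym 'a rvec = "(real,'a) vec"

lemma mv_axis[simp]: "((A::real^'n^'m) *v axis j 1)$i = A$i$j"
  unfolding matrix_vector_mult_def axis_def by (simp add: if_distrib[where f="\<lambda>x. _ * x"] cong: if_cong)

lemma ax_nth[simp]: "axis j (1::real) $ i = (if i = j then 1 else 0)"
  by (simp add: axis_def)

lemma coordspace_char: "coordspace S = {x. \<forall>i. i \<notin> S \<longrightarrow> x$i = 0}"
proof
  show "coordspace S \<subseteq> {x. \<forall>i. i \<notin> S \<longrightarrow> x$i = 0}"
    unfolding coordspace_def
  proof (rule span_minimal)
    show "subspace {x::real^'a. \<forall>i. i \<notin> S \<longrightarrow> x$i = 0}"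
      by (auto simp: subspace_def)
  qed (auto simp: axis_def)
next
  show "{x. \<forall>i. i \<notin> S \<longrightarrow> x$i = 0} \<subseteq> coordspace S"
  proof
    fix x :: "real^'a" assume x: "x \<in> {x. \<forall>i. i \<notin> S \<longrightarrow> x$i = 0}"
    have "x = (\<Sum>i\<in>UNIV. (x$i) *s axis i 1)" by (simp add: basis_expansion)
    also have "\<dots> = (\<Sum>i\<in>S. (x$i) *\<^sub>R axis i 1)"
      using x by (intro sum.mono_neutral_cong_right) (auto simp: scalar_mult_eq_scaleR)
    also have "\<dots> \<in> coordspace S" unfolding coordspace_def
      by (intro span_sum span_scale span_base) auto
    finally show "x \<in> coordspace S" .
  qed
qed

locale cp =
  fixes P :: "('n::{finite,linorder}) set set"
  assumes cpP: "consecutive_partition P"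
begin

lemma partP: "partition_on UNIV P" using cpP by (simp add: consecutive_partition_def)

definition blk :: "'n \<Rightarrow> 'n set" where "blk i = (THE I. I \<in> P \<and> i \<in> I)"

lemma blk_ex1: "\<exists>!I. I \<in> P \<and> i \<in> I"
proof -
  have "i \<in> \<Union>P" using partition_onD1[OF partP] by auto
  then obtain I where "I \<in> P" "i \<in> I" by auto
  moreover have "\<And>J. J \<in> P \<Longrightarrow> i \<in> J \<Longrightarrow> J = I"
    using disjointD[OF partition_onD2[OF partP]] calculation by blast
  ultimately show ?thesis by blast
qed

lemma blk_in: "blk i \<in> P" and blk_mem: "i \<in> blk i"
  using theI'[OF blk_ex1[of i]] by (auto simp: blk_def)

lemma blk_eq: "I \<in> P \<Longrightarrow> i \<in> I \<Longrightarrow> blk i = I"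
  using blk_ex1[of i] blk_in[of i] blk_mem[of i] by blast

lemma blk_eq_iff: "blk i = blk j \<longleftrightarrow> i \<in> blk j"
  using blk_eq[OF blk_in blk_mem] blk_eq[OF blk_in[of j]] blk_mem by metis

definition bef :: "'n \<Rightarrow> 'n \<Rightarrow> bool" where "bef i j = block_before (blk i) (blk j)"

lemma bef_less: "bef i j \<Longrightarrow> i < j"
  using blk_mem by (auto simp: bef_def block_before_def)

lemma bef_irrefl: "\<not> bef i i" using bef_less by blast

lemma bef_neq: "bef i j \<Longrightarrow> blk i \<noteq> blk j"
  using bef_irrefl by (auto simp: bef_def)

lemma bef_asym: "bef i j \<Longrightarrow> \<not> bef j i" using bef_less less_asym by blast

lemma bef_total: "blk i \<noteq> blk j \<Longrightarrow> bef i j \<or> bef j i"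
  using cpP blk_in by (auto simp: consecutive_partition_def bef_def)

lemma bef_trans: "bef i j \<Longrightarrow> bef j l \<Longrightarrow> bef i l"
  using blk_mem[of j] by (auto simp: bef_def block_before_def) (meson less_trans)

lemma bef_cong1: "blk i = blk i' \<Longrightarrow> bef i j = bef i' j" by (simp add: bef_def)
lemma bef_cong2: "blk j = blk j' \<Longrightarrow> bef i j = bef i j'" by (simp add: bef_def)

lemma union_before: "\<Union>{J\<in>P. block_before J (blk j)} = {i. bef i j}"
  apply (auto simp: bef_def)
  subgoal for x I using blk_eq by metis
  subgoal for x using blk_in blk_mem by blast
  done

definition unip where
  "unip (g::'n rmat) \<longleftrightarrow> (\<forall>i. g$i$i = 1) \<and> (\<forall>i j. i \<noteq> j \<and> \<not> bef i j \<longrightarrow> g$i$j = 0)"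

definition bdiag where
  "bdiag (k::'n rmat) \<longleftrightarrow> (\<forall>i j. k$i$j \<noteq> 0 \<longrightarrow> blk i = blk j)"

end

lemma permutes_ge_id:
  fixes p :: "'a::{finite,linorder} \<Rightarrow> 'a"
  assumes p: "p permutes UNIV" and ge: "\<And>i. i \<le> p i"
  shows "p = id"
proof (rule ccontr)
  assume "p \<noteq> id"
  then have ne: "{i. p i \<noteq> i} \<noteq> {}" by auto
  define m where "m = Max {i. p i \<noteq> i}"
  have m: "p m \<noteq> m" using Max_in[OF _ ne] m_def by auto
  have "p (p m) \<noteq> p m" using m p by (metis permutes_inj injD)
  then have "p m \<le> m" using m_def by (simp add: Max_ge)
  with ge[of m] m show False by auto
qed

lemma det_upper_unit:
  fixes A :: "((real,'n::{finite,linorder}) vec,'n) vec"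
  assumes "\<And>i j. j < i \<Longrightarrow> A$i$j = 0" and "\<And>i. A$i$i = 1"
  shows "det A = 1"
proof -
  let ?pp = "\<lambda>p. of_int (sign p) * prod (\<lambda>i. A$i$p i) (UNIV :: 'n set)"
  have p0: "\<forall>p \<in> {p. p permutes UNIV} - {id}. ?pp p = 0"
  proof
    fix p assume p: "p \<in> {p. p permutes (UNIV::'n set)} - {id}"
    have "\<not> (\<forall>i. i \<le> p i)" using permutes_ge_id[of p] p by auto
    then obtain i where i: "p i < i" by (auto simp: not_le)
    then show "?pp p = 0" using assms(1)[OF i] by (auto intro!: prod_zero)
  qed
  have "det A = sum ?pp {p. p permutes UNIV}" by (simp add: det_def)
  also have "\<dots> = sum ?pp {id}"
    by (rule sum.mono_neutral_right) (use p0 permutes_id in auto)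
  finally have "det A = ?pp id" by simp
  then show ?thesis using assms(2) by (simp add: sign_id)
qed

context cp begin

lemma unip_det: "unip g \<Longrightarrow> det g = 1"
  unfolding unip_def
  by (rule det_upper_unit) (metis bef_less less_asym less_imp_neq)+

lemma U_char: "U_part P = {g. unip g}"
proof -
  have "g \<in> U_part P \<longleftrightarrow> unip g" for g
  proof
    assume g: "g \<in> U_part P"
    show "unip g" unfolding unip_def
    proof (intro conjI allI impI)
      fix i j assume ij: "i \<noteq> j \<and> \<not> bef i j"
      have "axis j 1 \<in> coordspace (blk j)" by (simp add: coordspace_char axis_def blk_mem)
      moreover have "(\<lambda>x. x - g *v x) ` coordspace (blk j) \<subseteq> coordspace (\<Union>{J\<in>P. block_before J (blk j)})"
        using g blk_in[of j] by (auto simp: U_part_def)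
      ultimately have "axis j 1 - g *v axis j 1 \<in> coordspace {i. bef i j}"
        unfolding union_before by blast
      then have "(axis j 1 - g *v axis j 1) $ i = 0" using ij by (simp only: coordspace_char mem_Collect_eq) blast
      then show "g$i$j = 0" using ij by simp
    next
      fix i
      have "axis i 1 \<in> coordspace (blk i)" by (simp add: coordspace_char axis_def blk_mem)
      moreover have "(\<lambda>x. x - g *v x) ` coordspace (blk i) \<subseteq> coordspace (\<Union>{J\<in>P. block_before J (blk i)})"
        using g blk_in[of i] by (auto simp: U_part_def)
      ultimately have "axis i 1 - g *v axis i 1 \<in> coordspace {l. bef l i}"
        unfolding union_before by blast
      then have "(axis i 1 - g *v axis i 1) $ i = 0" using bef_irrefl by (simp only: coordspace_char mem_Collect_eq) blast
      then show "g$i$i = 1" by simp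
    qed
  next
    assume u: "unip g"
    have "(\<lambda>x. x - g *v x) ` coordspace I \<subseteq> coordspace (\<Union>{J\<in>P. block_before J I})"
      if I: "I \<in> P" for I
    proof clarify
      fix x assume x: "x \<in> coordspace I"
      then have x0: "\<And>i. i \<notin> I \<Longrightarrow> x$i = 0" by (simp add: coordspace_char)
      show "x - g *v x \<in> coordspace (\<Union>{J\<in>P. block_before J I})"
      proof (cases "I = {}")
        case True
        then show ?thesis using x0 u
          by (simp add: coordspace_char matrix_vector_mult_def)
      next
        case False
        then obtain j where j: "j \<in> I" by auto
        have Ib: "I = blk j" using blk_eq[OF I j] by simp
        show ?thesis unfolding Ib union_before coordspace_char
        proof (rule CollectI, intro allI impI)
          fix i assume "i \<notin> {i. bef i j}" then have ni: "\<not> bef i j" by simp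
          have "(g *v x)$i = (\<Sum>l\<in>UNIV. g$i$l * x$l)" by (simp add: matrix_vector_mult_def)
          also have "\<dots> = (\<Sum>l\<in>UNIV. (if l = i then x$i else 0))"
          proof (rule sum.cong[OF refl])
            fix l
            show "g$i$l * x$l = (if l = i then x$i else 0)"
            proof (cases "l = i")
              case True then show ?thesis using u by (simp add: unip_def)
            next
              case False
              show ?thesis
              proof (cases "x$l = 0")
                case True then show ?thesis using False by simp
              next
                case xl: False
                then have "l \<in> blk j" using x0 Ib by auto
                then have "blk l = blk j" by (simp add: blk_eq_iff)
                then have "\<not> bef i l" using ni bef_cong2 by metis
                then show ?thesis using u False by (simp add: unip_def)
              qed
            qed
          qed
          also have "\<dots> = x$i" by simp
          finally show "(x - g *v x)$i = 0" by simp
        qed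
      qed
    qed
    then show "g \<in> U_part P" using unip_det[OF u] by (auto simp: U_part_def SLN_def)
  qed
  then show ?thesis by auto
qed

end


lemma sum_only: "(\<And>l. l \<noteq> i \<Longrightarrow> f l = 0) \<Longrightarrow> (\<Sum>l\<in>(UNIV::'a::finite set). f l) = (f i :: real)"
proof -
  assume h: "\<And>l. l \<noteq> i \<Longrightarrow> f l = 0"
  have "(\<Sum>l\<in>UNIV. f l) = sum f {i}" by (rule sum.mono_neutral_right) (use h in auto)
  then show ?thesis by simp
qed

lemma sum_nz: "(\<Sum>l\<in>(UNIV::'a::finite set). f l) \<noteq> (0::real) \<Longrightarrow> \<exists>l. f l \<noteq> 0"
  by (metis sum.neutral)

lemma mmult_nth: "((A::real^'n^'m) ** B)$i$j = (\<Sum>l\<in>UNIV. A$i$l * B$l$j)"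
  by (simp add: matrix_matrix_mult_def)

lemma mat1_nth: "(mat 1 :: real^'n^'n)$i$j = (if i = j then 1 else 0)"
  by (simp add: mat_def)

lemma invertible_inv: "invertible (A::real^'n^'n) \<Longrightarrow> A ** matrix_inv A = mat 1 \<and> matrix_inv A ** A = mat 1"
  unfolding invertible_def matrix_inv_def by (rule someI_ex)

lemma matrix_inv_unique: "(A::real^'n^'n) ** B = mat 1 \<Longrightarrow> B ** A = mat 1 \<Longrightarrow> matrix_inv A = B"
proof -
  assume ab: "A ** B = mat 1" and ba: "B ** A = mat 1"
  then have inv: "invertible A" by (auto simp: invertible_def)
  have "matrix_inv A = matrix_inv A ** (A ** B)" by (simp add: ab)
  also have "\<dots> = (matrix_inv A ** A) ** B" by (simp add: matrix_mul_assoc)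
  also have "\<dots> = B" using invertible_inv[OF inv] by simp
  finally show ?thesis .
qed

lemma orth_inv: "orthogonal_matrix (k::real^'n^'n) \<Longrightarrow> matrix_inv k = transpose k"
  by (rule matrix_inv_unique) (auto simp: orthogonal_matrix_def)

context cp begin

lemma unip_mat1: "unip (mat 1)" by (simp add: unip_def mat1_nth)

lemma unipD1: "unip g \<Longrightarrow> g$i$i = 1" by (simp add: unip_def)
lemma unipD2: "unip g \<Longrightarrow> g$i$j \<noteq> 0 \<Longrightarrow> i = j \<or> bef i j" by (auto simp: unip_def)

lemma unip_mult: assumes a: "unip a" and b: "unip b" shows "unip (a ** b)"
  unfolding unip_def
proof (intro conjI allI impI)
  fix i
  have "(a ** b)$i$i = a$i$i * b$i$i" unfolding mmult_nth
  proof (rule sum_only)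
    fix l assume "l \<noteq> i"
    then show "a$i$l * b$l$i = 0" using unipD2[OF a, of i l] unipD2[OF b, of l i] bef_asym by auto
  qed
  then show "(a ** b)$i$i = 1" using a b by (simp add: unipD1)
next
  fix i j assume ij: "i \<noteq> j \<and> \<not> bef i j"
  have "(\<Sum>l\<in>UNIV. a$i$l * b$l$j) = 0"
  proof (rule sum.neutral, rule ballI)
    fix l
    show "a$i$l * b$l$j = 0"
      using unipD2[OF a, of i l] unipD2[OF b, of l j] ij bef_trans by auto
  qed
  then show "(a ** b)$i$j = 0" by (simp add: mmult_nth)
qed

lemma card_greater_less: "(c::'n) < e \<Longrightarrow> card {x. e < x} < card {x. c < x}"
  by (rule psubset_card_mono) auto

lemma unip_right_inv: assumes a: "unip a" and av: "a ** v = mat 1" shows "unip v"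
proof -
  have main: "\<forall>d. \<not> bef c d \<longrightarrow> v$c$d = (if c = d then 1 else 0)" for c
  proof (induct "card {e. c < e}" arbitrary: c rule: less_induct)
    case less
    show ?case proof (intro allI impI)
    fix d assume nb: "\<not> bef c d"
    have "(a ** v)$c$d = (if c = d then 1 else 0)" using av by (simp add: mat1_nth)
    moreover have "(a ** v)$c$d = v$c$d"
      unfolding mmult_nth
    proof (subst sum_only[of c])
      fix e assume ec: "e \<noteq> c"
      show "a$c$e * v$e$d = 0"
      proof (cases "a$c$e = 0")
        case False
        then have ce: "bef c e" using unipD2[OF a] ec by blast
        have "\<not> bef e d" using ce nb bef_trans by blast
        then have "v$e$d = (if e = d then 1 else 0)"
          using less(1)[OF card_greater_less[OF bef_less[OF ce]]] by blast
        then show ?thesis using ce nb by auto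
      qed simp
    qed (simp add: unipD1[OF a])
    ultimately show "v$c$d = (if c = d then 1 else 0)" by simp
  qed
  qed
  show ?thesis unfolding unip_def using main bef_irrefl by auto
qed

lemma unip_inv: assumes a: "unip a"
  shows "unip (matrix_inv a)" "a ** matrix_inv a = mat 1" "matrix_inv a ** a = mat 1"
proof -
  have "invertible a" using unip_det[OF a] by (simp add: invertible_det_nz)
  then show 1: "a ** matrix_inv a = mat 1" and "matrix_inv a ** a = mat 1"
    using invertible_inv by auto
  show "unip (matrix_inv a)" by (rule unip_right_inv[OF a 1])
qed

lemma bdiagD: "bdiag k \<Longrightarrow> k$i$j \<noteq> 0 \<Longrightarrow> blk i = blk j" by (simp add: bdiag_def)

lemma bdiag_mult: assumes "bdiag a" "bdiag b" shows "bdiag (a ** b)"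
  unfolding bdiag_def mmult_nth
proof (intro allI impI)
  fix i j assume "(\<Sum>l\<in>UNIV. a$i$l * b$l$j) \<noteq> 0"
  then obtain l where "a$i$l * b$l$j \<noteq> 0" using sum_nz by blast
  then show "blk i = blk j" using bdiagD[OF assms(1), of i l] bdiagD[OF assms(2), of l j] by auto
qed

lemma bdiag_transpose: "bdiag a \<Longrightarrow> bdiag (transpose a)"
  by (auto simp: bdiag_def transpose_def)

lemma bdiag_mat1: "bdiag (mat 1)" by (auto simp: bdiag_def mat1_nth)

lemma unip_conj: assumes a: "bdiag a" and b: "bdiag b" and ab: "a ** b = mat 1" and u: "unip u"
  shows "unip (a ** u ** b)"
proof -
  have main: "(a ** u ** b)$c$d = (if c = d then 1 else 0)" if nb: "\<not> bef c d" for c d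
  proof -
    have "(a ** u ** b)$c$d = (a ** (u ** b))$c$d" by (simp add: matrix_mul_assoc)
    also have "\<dots> = (\<Sum>e\<in>UNIV. a$c$e * b$e$d)"
      unfolding mmult_nth
    proof (rule sum.cong[OF refl])
      fix e
      show "a$c$e * (\<Sum>f\<in>UNIV. u$e$f * b$f$d) = a$c$e * b$e$d"
      proof (cases "a$c$e = 0")
        case False
        then have ce: "blk c = blk e" using bdiagD[OF a] by blast
        have "(\<Sum>f\<in>UNIV. u$e$f * b$f$d) = u$e$e * b$e$d"
        proof (rule sum_only)
          fix f assume fe: "f \<noteq> e"
          show "u$e$f * b$f$d = 0"
          proof (cases "b$f$d = 0")
            case False
            then have fd: "blk f = blk d" using bdiagD[OF b] by blast
            have "\<not> bef e f" using nb ce fd by (simp add: bef_def)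
            then show ?thesis using unipD2[OF u, of e f] fe by auto
          qed simp
        qed
        then show ?thesis by (simp add: unipD1[OF u])
      qed simp
    qed
    also have "\<dots> = (a ** b)$c$d" by (simp add: mmult_nth)
    finally show ?thesis using ab by (simp add: mat1_nth)
  qed
  show ?thesis unfolding unip_def using main bef_irrefl by auto
qed

lemma unip_segment: "unip u \<Longrightarrow> unip (mat 1 + t *\<^sub>R (u - mat 1))"
  by (auto simp: unip_def mat1_nth)

end


declare transpose_matrix_vector[simp del]

lemma tmv_nth: "(transpose (h::real^'n^'n) *v x)$d = (\<Sum>c\<in>UNIV. h$c$d * x$c)"
  by (simp add: matrix_vector_mult_def transpose_def mult.commute)

lemma norm_sq_sum: "(norm (x::real^'n))^2 = (\<Sum>i\<in>UNIV. (x$i)^2)"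
  unfolding power2_norm_eq_inner inner_vec_def by (simp add: power2_eq_square)

lemma orth_tr: "orthogonal_matrix (k::real^'n^'n) \<Longrightarrow> orthogonal_transformation (\<lambda>x. transpose k *v x)"
  unfolding orthogonal_transformation_matrix matrix_of_matrix_vector_mul by (simp add: matrix_vector_mul_linear)

lemma orth_tr': "orthogonal_matrix (k::real^'n^'n) \<Longrightarrow> orthogonal_transformation (\<lambda>x. k *v x)"
  unfolding orthogonal_transformation_matrix matrix_of_matrix_vector_mul by (simp add: matrix_vector_mul_linear)

context cp begin

definition good :: "'n rvec \<Rightarrow> bool" where
  "good x \<longleftrightarrow> (\<forall>h. unip h \<longrightarrow> norm x \<le> norm (transpose h *v x))"

definition RR :: "'n rvec \<Rightarrow> 'n rvec \<Rightarrow> bool" where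
  "RR x y \<longleftrightarrow> (\<forall>h. unip h \<longrightarrow> norm y \<le> norm (transpose h *v (x + y)))"

definition sblk :: "'n set \<Rightarrow> 'n rvec \<Rightarrow> bool" where
  "sblk B x \<longleftrightarrow> (\<forall>c. x$c \<noteq> 0 \<longrightarrow> blk c = B)"

lemma G2: assumes "sblk B x" shows "good x"
  unfolding good_def
proof (intro allI impI)
  fix h :: "'n rmat" assume h: "unip h"
  show "norm x \<le> norm (transpose h *v x)"
  proof (rule norm_le_componentwise_cart)
    fix d
    show "norm (x$d) \<le> norm ((transpose h *v x)$d)"
    proof (cases "blk d = B")
      case True
      have "(transpose h *v x)$d = h$d$d * x$d" unfolding tmv_nth
      proof (rule sum_only)
        fix c assume cd: "c \<noteq> d"
        show "h$c$d * x$c = 0"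
        proof (cases "x$c = 0")
          case False
          then have "blk c = B" using assms by (simp add: sblk_def)
          then have "\<not> bef c d" using True bef_neq by metis
          then show ?thesis using unipD2[OF h, of c d] cd by auto
        qed simp
      qed
      then show ?thesis using unipD1[OF h] by simp
    next
      case False
      then have "x$d = 0" using assms by (auto simp: sblk_def)
      then show ?thesis by simp
    qed
  qed
qed

definition rk1 :: "'n \<Rightarrow> 'n rvec \<Rightarrow> 'n rmat" where
  "rk1 a w = mat 1 - (\<chi> c d. if c = a then w$d else 0)"

lemma rk1_unip: assumes "\<And>d. w$d \<noteq> 0 \<Longrightarrow> bef a d" shows "unip (rk1 a w)"
  using assms bef_irrefl unfolding unip_def rk1_def
  by (auto simp: mat1_nth)

lemma rk1_apply: "transpose (rk1 a w) *v z = z - (z$a) *\<^sub>R w"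
proof -
  have "(transpose (rk1 a w) *v z)$d = z$d - z$a * w$d" for d
  proof -
    have "(transpose (rk1 a w) *v z)$d = (\<Sum>c\<in>UNIV. ((if c = d then 1 else 0) - (if c = a then w$d else 0)) * z$c)"
      unfolding tmv_nth rk1_def by (simp add: mat1_nth)
    also have "\<dots> = (\<Sum>c\<in>UNIV. (if c = d then z$c else 0) - (if c = a then w$d * z$c else 0))"
      by (rule sum.cong) (auto simp: algebra_simps)
    also have "\<dots> = (\<Sum>c\<in>UNIV. (if c = d then z$c else 0)) - (\<Sum>c\<in>UNIV. (if c = a then w$d * z$c else 0))"
      by (rule sum_subtractf)
    also have "\<dots> = z$d - z$a * w$d" by simp
    finally show ?thesis .
  qed
  then show ?thesis by (simp add: vec_eq_iff mult.commute)
qed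

lemma G3': assumes g: "good x" and a: "x$a \<noteq> 0" and b: "x$b \<noteq> 0" and ab: "bef a b"
  shows False
proof -
  define w where "w = (\<chi> d. if blk d = blk b then x$d / x$a else 0)"
  have wsupp: "\<And>d. w$d \<noteq> 0 \<Longrightarrow> bef a d"
  proof -
    fix d assume "w$d \<noteq> 0"
    then have "blk d = blk b" by (simp add: w_def split: if_splits)
    then show "bef a d" using ab by (simp add: bef_def)
  qed
  define y where "y = transpose (rk1 a w) *v x"
  have y: "y$d = (if blk d = blk b then 0 else x$d)" for d
    unfolding y_def rk1_apply w_def using a by simp
  have le: "norm x \<le> norm y" using g rk1_unip[OF wsupp] unfolding good_def y_def by blast
  have "(\<Sum>i\<in>UNIV. (y$i)^2) < (\<Sum>i\<in>UNIV. (x$i)^2)"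
  proof (rule sum_strict_mono_ex1)
    show "\<forall>i\<in>UNIV. (y$i)^2 \<le> (x$i)^2" by (simp add: y)
    show "\<exists>i\<in>UNIV. (y$i)^2 < (x$i)^2" using b by (intro bexI[of _ b]) (auto simp: y)
  qed simp
  then have "(norm y)^2 < (norm x)^2" by (simp add: norm_sq_sum)
  then have "norm y < norm x" using norm_ge_zero power_less_imp_less_base by blast
  then show False using le by simp
qed

lemma G3: assumes "good x" "x$a \<noteq> 0" "x$b \<noteq> 0" shows "blk a = blk b"
  using G3'[OF assms] G3'[OF assms(1,3,2)] bef_total by blast

lemma good_sblk: assumes "good x" "x$a \<noteq> 0" shows "sblk (blk a) x"
  using G3[OF assms(1) _ assms(2)] unfolding sblk_def by metis

lemma RR_axis: assumes "bef l i" shows "RR (axis i 1) (t *\<^sub>R axis l 1)"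
  unfolding RR_def
proof (intro allI impI)
  fix h :: "'n rmat" assume h: "unip h"
  have "(transpose h *v (axis i 1 + t *\<^sub>R axis l 1))$l = h$i$l + t * h$l$l"
    by (simp add: matrix_vector_right_distrib matrix_vector_mult_scaleR transpose_def)
  also have "\<dots> = t" using unipD1[OF h] unipD2[OF h, of i l] bef_asym[OF assms] bef_neq[OF assms] by auto
  finally have "\<bar>t\<bar> \<le> norm (transpose h *v (axis i 1 + t *\<^sub>R axis l 1))"
    using component_le_norm_cart by metis
  then show "norm (t *\<^sub>R axis l (1::real)) \<le> norm (transpose h *v (axis i 1 + t *\<^sub>R axis l 1))"
    by simp
qed

definition Stab :: "'n rmat \<Rightarrow> bool" where
  "Stab k \<longleftrightarrow> (\<forall>h. unip h \<longrightarrow> (\<exists>h'. unip h' \<and>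
      (\<forall>x. norm (transpose h *v (transpose k *v x)) = norm (transpose h' *v x))))"

lemma good_transport: assumes o: "orthogonal_matrix k" and s: "Stab k" and g: "good x"
  shows "good (transpose k *v x)"
  unfolding good_def
proof (intro allI impI)
  fix h :: "'n rmat" assume h: "unip h"
  obtain h' where h': "unip h'" "\<And>x. norm (transpose h *v (transpose k *v x)) = norm (transpose h' *v x)"
    using s h unfolding Stab_def by blast
  have "norm (transpose k *v x) = norm x" using orthogonal_transformation_norm[OF orth_tr[OF o]] .
  also have "\<dots> \<le> norm (transpose h' *v x)" using g h' by (simp add: good_def)
  also have "\<dots> = norm (transpose h *v (transpose k *v x))" using h' by simp
  finally show "norm (transpose k *v x) \<le> norm (transpose h *v (transpose k *v x))" .
qed

lemma RR_transport: assumes o: "orthogonal_matrix k" and s: "Stab k" and r: "RR x y"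
  shows "RR (transpose k *v x) (transpose k *v y)"
  unfolding RR_def
proof (intro allI impI)
  fix h :: "'n rmat" assume h: "unip h"
  obtain h' where h': "unip h'" "\<And>x. norm (transpose h *v (transpose k *v x)) = norm (transpose h' *v x)"
    using s h unfolding Stab_def by blast
  have "norm (transpose k *v y) = norm y" using orthogonal_transformation_norm[OF orth_tr[OF o]] .
  also have "\<dots> \<le> norm (transpose h' *v (x + y))" using r h' by (simp add: RR_def)
  also have "\<dots> = norm (transpose h *v (transpose k *v (x + y)))" using h' by simp
  also have "transpose k *v (x + y) = transpose k *v x + transpose k *v y"
    by (simp add: matrix_vector_right_distrib)
  finally show "norm (transpose k *v y) \<le> norm (transpose h *v (transpose k *v x + transpose k *v y))" .
qed

end


context cp begin

lemma sblk_axis: "sblk (blk i) (axis i 1)"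
  by (simp add: sblk_def)

lemma core: assumes o: "orthogonal_matrix k" and s: "Stab k" and ji: "bef j i"
  shows "k$i$j = 0"
proof (rule ccontr)
  assume nz: "k$i$j \<noteq> 0"
  define \<phi> where "\<phi> = (\<lambda>x. transpose k *v x)"
  have ot: "orthogonal_transformation \<phi>" unfolding \<phi>_def by (rule orth_tr[OF o])
  have phin: "\<And>x. norm (\<phi> x) = norm x" using orthogonal_transformation_norm[OF ot] .
  have phii: "\<And>x y. \<phi> x \<bullet> \<phi> y = x \<bullet> y" using ot by (simp add: orthogonal_transformation_def)
  have phie: "\<phi> (axis l 1) $ m = k$l$m" for l m unfolding \<phi>_def by (simp add: transpose_def)
  define z where "z = \<phi> (axis i 1)"
  have zj: "z$j \<noteq> 0" using nz phie z_def by simp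
  have zg: "good z" unfolding z_def \<phi>_def by (rule good_transport[OF o s G2[OF sblk_axis]])
  have zs: "sblk (blk j) z" by (rule good_sblk[OF zg zj])
  have ysupp: "\<not> bef j m" if l: "bef l i" and ym: "\<phi> (axis l 1) $ m \<noteq> 0" for l m
  proof
    assume jm: "bef j m"
    define y where "y = \<phi> (axis l 1)"
    have yg: "good y" unfolding y_def \<phi>_def by (rule good_transport[OF o s G2[OF sblk_axis]])
    have ys: "sblk (blk m) y" using good_sblk[OF yg] ym y_def by simp
    have r: "RR z (2 *\<^sub>R y)"
      using RR_transport[OF o s RR_axis[OF l, of 2]] unfolding z_def y_def \<phi>_def
      by (simp add: matrix_vector_mult_scaleR)
    define w where "w = (\<chi> d. if blk d = blk m then 2 * y$d / z$j else 0)"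
    have wsupp: "\<And>d. w$d \<noteq> 0 \<Longrightarrow> bef j d"
    proof -
      fix d assume "w$d \<noteq> 0"
      then have "blk d = blk m" by (simp add: w_def split: if_splits)
      then show "bef j d" using jm by (simp add: bef_def)
    qed
    have yj: "y$j = 0" using ys bef_neq[OF jm] by (auto simp: sblk_def)
    have "transpose (rk1 j w) *v (z + 2 *\<^sub>R y) = z"
    proof -
      have "(transpose (rk1 j w) *v (z + 2 *\<^sub>R y))$d = z$d" for d
      proof (cases "blk d = blk m")
        case True then show ?thesis using zj yj by (simp add: rk1_apply w_def)
      next
        case False
        then have "y$d = 0" using ys by (auto simp: sblk_def)
        then show ?thesis using False by (simp add: rk1_apply w_def)
      qed
      then show ?thesis by (simp add: vec_eq_iff)
    qed
    then have "norm (2 *\<^sub>R y) \<le> norm z" using r rk1_unip[OF wsupp] unfolding RR_def by metis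
    moreover have "norm y = 1" "norm z = 1" unfolding y_def z_def by (simp_all add: phin)
    ultimately show False by simp
  qed
  define S where "S = {l. bef l i}"
  define X where "X = (\<lambda>l. \<phi> (axis l 1)) ` insert i S"
  have iS: "i \<notin> S" using bef_irrefl S_def by auto
  have inj: "inj_on (\<lambda>l. \<phi> (axis l 1)) (insert i S)"
  proof (rule inj_onI)
    fix l l' assume "\<phi> (axis l 1) = \<phi> (axis l' 1)"
    then have "\<phi> (axis l 1) \<bullet> \<phi> (axis l' 1) = 1" using phin by (metis norm_axis_1 norm_eq_1)
    then show "l = l'" using phii by (simp add: inner_axis_axis split: if_splits)
  qed
  have cardX: "card X = card S + 1"
    unfolding X_def using card_image[OF inj] iS S_def by simp
  have indep: "independent X"
  proof (rule pairwise_orthogonal_independent)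
    show "pairwise orthogonal X"
      unfolding pairwise_def X_def orthogonal_def
      using phii by (auto simp: inner_axis_axis)
    show "0 \<notin> X"
    proof
      assume "0 \<in> X"
      then obtain l where "\<phi> (axis l 1) = 0" by (auto simp: X_def)
      then have "norm (axis l (1::real)) = 0" using phin by (metis norm_zero)
      then show False by simp
    qed
  qed
  have Xsub: "X \<subseteq> span ((\<lambda>i. axis i (1::real)) ` S)"
  proof
    fix x assume "x \<in> X"
    then obtain l where l: "l \<in> insert i S" and x: "x = \<phi> (axis l 1)" unfolding X_def by auto
    have "\<forall>m. m \<notin> S \<longrightarrow> x$m = 0"
    proof (intro allI impI)
      fix m assume mS: "m \<notin> S"
      show "x$m = 0"
      proof (rule ccontr)
        assume xm: "x$m \<noteq> 0"
        have "\<not> bef j m"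
        proof (cases "l = i")
          case True
          then have "blk m = blk j" using zs xm x z_def by (auto simp: sblk_def)
          then show ?thesis using bef_neq by metis
        next
          case False then show ?thesis using ysupp l xm x S_def by auto
        qed
        then have "bef m i"
        proof (cases "blk m = blk j")
          case True then show ?thesis using ji by (simp add: bef_def)
        next
          case False then show ?thesis using bef_total \<open>\<not> bef j m\<close> ji bef_trans by blast
        qed
        then show False using mS S_def by simp
      qed
    qed
    then show "x \<in> span ((\<lambda>i. axis i (1::real)) ` S)" using coordspace_char[of S] unfolding coordspace_def by blast
  qed
  have "finite X \<and> card X \<le> card ((\<lambda>i. axis i (1::real)) ` S)"
    by (rule independent_span_bound[OF _ indep Xsub]) simp
  moreover have "card ((\<lambda>i. axis i (1::real)) ` S :: 'n rvec set) \<le> card S" by (rule card_image_le) simp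
  ultimately show False using cardX by simp
qed

end


lemma SON_mat1: "mat 1 \<in> SON" by (simp add: SON_def orthogonal_matrix_id)
lemma SON_mult: "a \<in> SON \<Longrightarrow> b \<in> SON \<Longrightarrow> a ** b \<in> SON"
  by (simp add: SON_def orthogonal_matrix_mul det_mul)
lemma SON_transpose: "a \<in> SON \<Longrightarrow> transpose a \<in> SON"
  by (simp add: SON_def)
lemma orthD1: "orthogonal_matrix (k::real^'n^'n) \<Longrightarrow> transpose k ** k = mat 1"
  by (simp add: orthogonal_matrix_def)
lemma orthD2: "orthogonal_matrix (k::real^'n^'n) \<Longrightarrow> k ** transpose k = mat 1"
  by (simp add: orthogonal_matrix_def)

lemma SON_left: fixes q :: "real^'n^'n" assumes q: "q \<in> SON" shows "(\<lambda>k. q ** k) ` SON = SON"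
proof
  show "(\<lambda>k. q ** k) ` SON \<subseteq> SON" using SON_mult q by auto
  show "SON \<subseteq> (\<lambda>k. q ** k) ` SON"
  proof
    fix k :: "real^'n^'n" assume k: "k \<in> SON"
    have "q ** transpose q = mat 1" using q by (simp add: SON_def orthogonal_matrix_def)
    then have "k = q ** (transpose q ** k)" by (simp add: matrix_mul_assoc)
    moreover have "transpose q ** k \<in> SON" using SON_mult SON_transpose q k by blast
    ultimately show "k \<in> (\<lambda>k. q ** k) ` SON" by blast
  qed
qed

lemma lcoset_mem: "g \<in> lcosetK g"
  unfolding lcosetK_def using SON_mat1 by force

lemma lcoset_mult: assumes "q \<in> SON" shows "lcosetK (a ** q) = lcosetK a"
proof -
  have "lcosetK (a ** q) = (\<lambda>k. a ** k) ` ((\<lambda>k. q ** k) ` SON)"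
    unfolding lcosetK_def by (simp add: image_image matrix_mul_assoc)
  then show ?thesis using SON_left[OF assms] by (simp add: lcosetK_def)
qed

lemma lcoset_eq: "lcosetK g = lcosetK u \<Longrightarrow> \<exists>q\<in>SON. g = u ** q"
  using lcoset_mem[of g] unfolding lcosetK_def by auto

context cp begin

lemma Stab_intro:
  assumes "\<And>h. unip h \<Longrightarrow> \<exists>h' q. unip h' \<and> q \<in> SON \<and> k ** h = h' ** q"
  shows "Stab k"
  unfolding Stab_def
proof (intro allI impI)
  fix h assume h: "unip h"
  then obtain h' q where hq: "unip h'" "q \<in> SON" "k ** h = h' ** q" using assms by blast
  have "norm (transpose h *v (transpose k *v x)) = norm (transpose h' *v x)" for x
  proof -
    have "transpose h *v (transpose k *v x) = transpose (k ** h) *v x"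
      by (simp add: matrix_vector_mul_assoc matrix_transpose_mul)
    also have "\<dots> = transpose q *v (transpose h' *v x)"
      using hq(3) by (simp add: matrix_vector_mul_assoc matrix_transpose_mul)
    finally show ?thesis
      using orthogonal_transformation_norm[OF orth_tr, of q] hq(2) by (simp add: SON_def)
  qed
  then show "\<exists>h'. unip h' \<and> (\<forall>x. norm (transpose h *v (transpose k *v x)) = norm (transpose h' *v x))"
    using hq(1) by blast
qed

lemma bdiag_of_stab: assumes o: "orthogonal_matrix k" and s1: "Stab k" and s2: "Stab (transpose k)"
  shows "bdiag k"
  unfolding bdiag_def
proof (intro allI impI)
  fix i j assume nz: "k$i$j \<noteq> 0"
  show "blk i = blk j"
  proof (rule ccontr)
    assume "blk i \<noteq> blk j"
    then consider "bef i j" | "bef j i" using bef_total by blast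
    then show False
    proof cases
      case 1
      have "(transpose k)$j$i = 0" by (rule core) (use o s2 1 in auto)
      then show False using nz by (simp add: transpose_def)
    next
      case 2
      have "k$i$j = 0" by (rule core[OF o s1 2])
      then show False using nz by simp
    qed
  qed
qed

lemma normalizer_char: "k \<in> normalizer_K (U_part P) \<longleftrightarrow> k \<in> SON \<and> bdiag k"
proof
  assume k: "k \<in> normalizer_K (U_part P)"
  then have kS: "k \<in> SON" and img: "(\<lambda>u. k ** u ** transpose k) ` {g. unip g} = {g. unip g}"
    by (auto simp: normalizer_K_def U_char orth_inv SON_def)
  have o: "orthogonal_matrix k" using kS by (simp add: SON_def)
  have s1: "Stab k"
  proof (rule Stab_intro)
    fix h assume h: "unip h"
    have "unip (k ** h ** transpose k)" using img h by blast
    moreover have "k ** h = (k ** h ** transpose k) ** k"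
      using orthD1[OF o] by (simp add: matrix_mul_assoc[symmetric])
    ultimately show "\<exists>h' q. unip h' \<and> q \<in> SON \<and> k ** h = h' ** q" using kS by blast
  qed
  have s2: "Stab (transpose k)"
  proof (rule Stab_intro)
    fix h assume h: "unip h"
    then obtain h'' where h'': "unip h''" "h = k ** h'' ** transpose k" using img by blast
    have "transpose k ** h = h'' ** transpose k"
      unfolding h''(2) using orthD1[OF o] by (simp add: matrix_mul_assoc)
    then show "\<exists>h' q. unip h' \<and> q \<in> SON \<and> transpose k ** h = h' ** q"
      using h''(1) SON_transpose[OF kS] by blast
  qed
  show "k \<in> SON \<and> bdiag k" using kS bdiag_of_stab[OF o s1 s2] by simp
next
  assume k: "k \<in> SON \<and> bdiag k"
  then have o: "orthogonal_matrix k" by (simp add: SON_def)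
  have bt: "bdiag (transpose k)" using k bdiag_transpose by blast
  have "(\<lambda>u. k ** u ** transpose k) ` {g. unip g} = {g. unip g}"
  proof
    show "(\<lambda>u. k ** u ** transpose k) ` {g. unip g} \<subseteq> {g. unip g}"
      using unip_conj[of k "transpose k"] k bt orthD2[OF o] by auto
    show "{g. unip g} \<subseteq> (\<lambda>u. k ** u ** transpose k) ` {g. unip g}"
    proof
      fix v assume v: "v \<in> {g. unip g}"
      have "unip (transpose k ** v ** k)" using unip_conj[of "transpose k" k v] k bt orthD1[OF o] v by auto
      moreover have "k ** (transpose k ** v ** k) ** transpose k = (k ** transpose k) ** v ** (k ** transpose k)"
        by (simp add: matrix_mul_assoc)
      then have "v = k ** (transpose k ** v ** k) ** transpose k"
        using orthD2[OF o] by simp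
      ultimately show "v \<in> (\<lambda>u. k ** u ** transpose k) ` {g. unip g}" by blast
    qed
  qed
  then show "k \<in> normalizer_K (U_part P)"
    using k by (simp add: normalizer_K_def U_char orth_inv[OF o])
qed

end


context cp begin

lemma part1: "G_hor P = setmul (normalizer_K (U_part P)) (U_part P)"
proof
  show "G_hor P \<subseteq> setmul (normalizer_K (U_part P)) (U_part P)"
  proof
    fix g assume g: "g \<in> G_hor P"
    then have EQ: "(\<lambda>h. lcosetK (g ** h)) ` {x. unip x} = lcosetK ` {x. unip x}"
      by (simp add: G_hor_def U_char)
    have "lcosetK (g ** mat 1) \<in> lcosetK ` {x. unip x}"
      using EQ unip_mat1 by blast
    then obtain u where u: "unip u" "lcosetK g = lcosetK u" by auto
    then obtain k where kS: "k \<in> SON" and gk: "g = u ** k" using lcoset_eq by blast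
    have o: "orthogonal_matrix k" using kS by (simp add: SON_def)
    define ui where "ui = matrix_inv u"
    have ui: "unip ui" "u ** ui = mat 1" "ui ** u = mat 1" using unip_inv[OF u(1)] ui_def by auto
    have kg: "k = ui ** g" unfolding gk using ui(3) by (simp add: matrix_mul_assoc)
    have s1: "Stab k"
    proof (rule Stab_intro)
      fix h assume h: "unip h"
      have "lcosetK (g ** h) \<in> lcosetK ` {x. unip x}" using EQ h by blast
      then obtain v where v: "unip v" "lcosetK (g ** h) = lcosetK v" by auto
      then obtain q where q: "q \<in> SON" "g ** h = v ** q" using lcoset_eq by blast
      have "k ** h = (ui ** v) ** q" unfolding kg using q(2) by (simp add: matrix_mul_assoc[symmetric])
      then show "\<exists>h' q. unip h' \<and> q \<in> SON \<and> k ** h = h' ** q"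
        using unip_mult[OF ui(1) v(1)] q(1) by blast
    qed
    have s2: "Stab (transpose k)"
    proof (rule Stab_intro)
      fix h assume h: "unip h"
      have "lcosetK (u ** h) \<in> (\<lambda>h. lcosetK (g ** h)) ` {x. unip x}"
        using EQ unip_mult[OF u(1) h] by blast
      then obtain h'' where h'': "unip h''" "lcosetK (u ** h) = lcosetK (g ** h'')" by auto
      then obtain q where q: "q \<in> SON" "u ** h = (g ** h'') ** q" using lcoset_eq by blast
      have "transpose k ** ui ** (u ** h) = transpose k ** (ui ** u) ** h"
        by (simp add: matrix_mul_assoc)
      then have "transpose k ** h = transpose k ** ui ** (u ** h)"
        using ui(3) by simp
      also have "\<dots> = (transpose k ** (ui ** g)) ** h'' ** q"
        unfolding q(2) by (simp add: matrix_mul_assoc)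
      also have "\<dots> = h'' ** q" unfolding kg[symmetric] using orthD1[OF o] by simp
      finally show "\<exists>h' q. unip h' \<and> q \<in> SON \<and> transpose k ** h = h' ** q"
        using h''(1) q(1) by blast
    qed
    have bk: "bdiag k" by (rule bdiag_of_stab[OF o s1 s2])
    have kN: "k \<in> normalizer_K (U_part P)" using normalizer_char kS bk by blast
    have w: "unip (transpose k ** u ** k)"
      by (rule unip_conj[OF bdiag_transpose[OF bk] bk orthD1[OF o] u(1)])
    have "g = k ** (transpose k ** u ** k)"
    proof -
      have "k ** (transpose k ** u ** k) = (k ** transpose k) ** u ** k" by (simp add: matrix_mul_assoc)
      then show ?thesis using orthD2[OF o] gk by simp
    qed
    then show "g \<in> setmul (normalizer_K (U_part P)) (U_part P)"
      unfolding setmul_def using kN w U_char by blast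
  qed
next
  show "setmul (normalizer_K (U_part P)) (U_part P) \<subseteq> G_hor P"
  proof
    fix g assume "g \<in> setmul (normalizer_K (U_part P)) (U_part P)"
    then obtain k u where k: "k \<in> normalizer_K (U_part P)" and u': "u \<in> U_part P" and g: "g = k ** u"
      unfolding setmul_def by blast
    have u: "unip u" using u' U_char by simp
    have kS: "k \<in> SON" and bk: "bdiag k" using k normalizer_char by auto
    have o: "orthogonal_matrix k" using kS by (simp add: SON_def)
    have bt: "bdiag (transpose k)" using bdiag_transpose[OF bk] .
    have detg: "det g = 1" using kS unip_det[OF u] by (simp add: g det_mul SON_def)
    define ui where "ui = matrix_inv u"
    have ui: "unip ui" "u ** ui = mat 1" "ui ** u = mat 1" using unip_inv[OF u] ui_def by auto
    have "(\<lambda>h. lcosetK (g ** h)) ` {x. unip x} = lcosetK ` {x. unip x}"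
    proof
      show "(\<lambda>h. lcosetK (g ** h)) ` {x. unip x} \<subseteq> lcosetK ` {x. unip x}"
      proof clarify
        fix h assume h: "unip h"
        have c: "unip (k ** (u ** h) ** transpose k)"
          by (rule unip_conj[OF bk bt orthD2[OF o] unip_mult[OF u h]])
        have "(k ** (u ** h) ** transpose k) ** k = k ** (u ** h) ** (transpose k ** k)"
          by (simp add: matrix_mul_assoc)
        then have "g ** h = (k ** (u ** h) ** transpose k) ** k"
          using orthD1[OF o] g by (simp add: matrix_mul_assoc)
        then have "lcosetK (g ** h) = lcosetK (k ** (u ** h) ** transpose k)"
          using lcoset_mult[OF kS] by simp
        then show "lcosetK (g ** h) \<in> lcosetK ` {x. unip x}" using c by blast
      qed
      show "lcosetK ` {x. unip x} \<subseteq> (\<lambda>h. lcosetK (g ** h)) ` {x. unip x}"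
      proof clarify
        fix v assume v: "unip v"
        define w where "w = transpose k ** v ** k"
        have wu: "unip w" unfolding w_def by (rule unip_conj[OF bt bk orthD1[OF o] v])
        have "g ** (ui ** w) = k ** (u ** ui) ** w" unfolding g by (simp add: matrix_mul_assoc)
        then have "g ** (ui ** w) = k ** w" using ui(2) by simp
        also have "k ** w = (k ** transpose k) ** v ** k" unfolding w_def by (simp add: matrix_mul_assoc)
        also have "\<dots> = v ** k" using orthD2[OF o] by simp
        finally have "lcosetK v = lcosetK (g ** (ui ** w))" using lcoset_mult[OF kS] by simp
        then show "lcosetK v \<in> (\<lambda>h. lcosetK (g ** h)) ` {x. unip x}"
          using unip_mult[OF ui(1) wu] by blast
      qed
    qed
    then show "g \<in> G_hor P" using detg by (simp add: G_hor_def SLN_def U_char)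
  qed
qed

end


lemma cont_det[continuous_intros]: "continuous_on S (f :: 'a::topological_space \<Rightarrow> real^'n^'n) \<Longrightarrow> continuous_on S (\<lambda>x. det (f x))"
  unfolding det_def by (intro continuous_intros)

lemma cont_bdet[continuous_intros]: "continuous_on S (f :: 'a::topological_space \<Rightarrow> real^'n^'n) \<Longrightarrow> continuous_on S (\<lambda>x. block_det (f x) I)"
  unfolding block_det_def by (intro continuous_intros)

lemma cont_mmul[continuous_intros]: "continuous_on S (f :: 'a::topological_space \<Rightarrow> real^'n^'n) \<Longrightarrow> continuous_on S g
   \<Longrightarrow> continuous_on S (\<lambda>x. f x ** g x)"
  unfolding matrix_matrix_mult_def by (intro continuous_intros)

lemma cont_transpose[continuous_intros]: "continuous_on S (f :: 'a::topological_space \<Rightarrow> real^'n^'n)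
   \<Longrightarrow> continuous_on S (\<lambda>x. transpose (f x))"
  unfolding transpose_def by (intro continuous_intros)

lemma pm1_const:
  fixes f :: "'a::topological_space \<Rightarrow> real"
  assumes "connected T" "continuous_on T f" "\<forall>x\<in>T. f x = 1 \<or> f x = -1" "a \<in> T" "f a = 1" "b \<in> T"
  shows "f b = 1"
proof (rule ccontr)
  assume "f b \<noteq> 1"
  then have fb: "f b = -1" using assms by auto
  have c: "connected (f ` T)" by (rule connected_continuous_image[OF assms(2,1)])
  have "{f b..f a} \<subseteq> f ` T" by (rule connected_contains_Icc[OF c]) (use assms in auto)
  then have "(0::real) \<in> f ` T" using fb assms(5) by auto
  then show False using assms(3) by force
qed

definition emb :: "real^'n^'n \<Rightarrow> 'n set \<Rightarrow> real^'n^'n" where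
  "emb k I = (\<chi> c d. if c \<in> I \<and> d \<in> I then k$c$d else (if c = d then 1 else 0))"

lemma det_emb: "det (emb k I) = block_det k I"
proof -
  let ?E = "emb k I"
  let ?f = "\<lambda>p. of_int (sign p) * (\<Prod>i\<in>UNIV. ?E$i$p i)"
  have "det ?E = sum ?f {p. p permutes UNIV}" by (simp add: det_def)
  also have "\<dots> = sum ?f {p. p permutes I}"
  proof (rule sum.mono_neutral_right)
    show "{p. p permutes I} \<subseteq> {p. p permutes UNIV}" by (auto intro: permutes_subset)
    show "\<forall>p\<in>{p. p permutes UNIV} - {p. p permutes I}. ?f p = 0"
    proof
      fix p assume p: "p \<in> {p. p permutes UNIV} - {p. p permutes I}"
      have "\<exists>x. x \<notin> I \<and> p x \<noteq> x"
      proof (rule ccontr)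
        assume "\<not> (\<exists>x. x \<notin> I \<and> p x \<noteq> x)"
        then have "p permutes I" using p unfolding permutes_def by auto
        then show False using p by simp
      qed
      then obtain x where "x \<notin> I" "p x \<noteq> x" by blast
      then have "?E$x$p x = 0" by (simp add: emb_def)
      then show "?f p = 0" by (auto intro!: prod_zero)
    qed
  qed simp
  also have "\<dots> = (\<Sum>p | p permutes I. of_int (sign p) * (\<Prod>i\<in>I. k$i$p i))"
  proof (rule sum.cong[OF refl])
    fix p assume "p \<in> {p. p permutes I}"
    then have p: "p permutes I" by simp
    have "(\<Prod>i\<in>UNIV. ?E$i$p i) = (\<Prod>i\<in>I. ?E$i$p i)"
      by (rule prod.mono_neutral_right) (use permutes_not_in[OF p] in \<open>auto simp: emb_def\<close>)
    also have "\<dots> = (\<Prod>i\<in>I. k$i$p i)"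
      by (rule prod.cong[OF refl]) (use permutes_in_image[OF p] in \<open>auto simp: emb_def\<close>)
    finally show "?f p = of_int (sign p) * (\<Prod>i\<in>I. k$i$p i)" by simp
  qed
  finally show ?thesis by (simp add: block_det_def)
qed

context cp begin

definition N0 :: "'n rmat set" where "N0 = {k. bdiag k \<and> orthogonal_matrix k}"

lemma emb_alt: assumes b: "bdiag k" and I: "I \<in> P"
  shows "(emb k I)$l$c = (if c \<in> I then k$l$c else (if l = c then 1 else 0))"
proof -
  have "k$l$c = 0" if "c \<in> I" "l \<notin> I"
  proof (rule ccontr)
    assume "k$l$c \<noteq> 0"
    then have "blk l = blk c" using bdiagD[OF b] by blast
    then show False using that blk_eq[OF I] blk_mem by metis
  qed
  then show ?thesis by (auto simp: emb_def)
qed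

lemma emb_orth: assumes k: "k \<in> N0" and I: "I \<in> P" shows "orthogonal_matrix (emb k I)"
proof -
  have b: "bdiag k" and o: "orthogonal_matrix k" using k by (auto simp: N0_def)
  have kk: "(\<Sum>l\<in>UNIV. k$l$c * k$l$d) = (if c = d then 1 else 0)" for c d
    using orthD1[OF o] by (simp add: vec_eq_iff mmult_nth mat1_nth transpose_def)
  have z: "k$l$c = 0" if "c \<in> I" "l \<notin> I" for l c
  proof (rule ccontr)
    assume "k$l$c \<noteq> 0"
    then have "blk l = blk c" using bdiagD[OF b] by blast
    then show False using that blk_eq[OF I] blk_mem by metis
  qed
  have "transpose (emb k I) ** emb k I = mat 1"
  proof -
    have "(\<Sum>l\<in>UNIV. (emb k I)$l$c * (emb k I)$l$d) = (if c = d then 1 else 0)" for c d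
    proof (cases "c \<in> I")
      case cI: True
      show ?thesis
      proof (cases "d \<in> I")
        case True then show ?thesis using cI kk by (simp add: emb_alt[OF b I])
      next
        case False
        have "(\<Sum>l\<in>UNIV. (emb k I)$l$c * (emb k I)$l$d) = k$d$c"
          unfolding emb_alt[OF b I] using cI False by (subst sum_only[of d]) auto
        then show ?thesis using z[OF cI False] cI False by auto
      qed
    next
      case cI: False
      have "(\<Sum>l\<in>UNIV. (emb k I)$l$c * (emb k I)$l$d) = (emb k I)$c$d"
        unfolding emb_alt[OF b I] using cI by (subst sum_only[of c]) auto
      then show ?thesis using cI z[of d c] by (auto simp: emb_alt[OF b I])
    qed
    then show ?thesis by (simp add: vec_eq_iff mmult_nth mat1_nth transpose_def)
  qed
  then show ?thesis by (simp add: orthogonal_matrix_def matrix_left_right_inverse)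
qed

lemma N0_bdet: "k \<in> N0 \<Longrightarrow> I \<in> P \<Longrightarrow> block_det k I = 1 \<or> block_det k I = -1"
  using det_orthogonal_matrix[OF emb_orth] det_emb by metis

lemma N0_det: "k \<in> N0 \<Longrightarrow> det k = 1 \<or> det k = -1"
  using det_orthogonal_matrix by (auto simp: N0_def)

lemma N0_mult: "a \<in> N0 \<Longrightarrow> b \<in> N0 \<Longrightarrow> a ** b \<in> N0"
  by (simp add: N0_def bdiag_mult orthogonal_matrix_mul)

lemma N0_transpose: "a \<in> N0 \<Longrightarrow> transpose a \<in> N0"
  by (simp add: N0_def bdiag_transpose)

lemma N0_mat1: "mat 1 \<in> N0"
  by (simp add: N0_def bdiag_mat1 orthogonal_matrix_id)

lemma path_det: assumes "path \<gamma>" "\<forall>t\<in>{0..1}. \<gamma> t \<in> N0" "det (\<gamma> 0) = 1" "t \<in> {0..1::real}"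
  shows "det (\<gamma> t) = 1"
  using pm1_const[of "{0..1}" "\<lambda>t. det (\<gamma> t)" 0 t] assms N0_det
  by (auto simp: path_def intro!: continuous_intros)

lemma path_bdet: assumes "path \<gamma>" "\<forall>t\<in>{0..1}. \<gamma> t \<in> N0" "block_det (\<gamma> 0) I = 1" "I \<in> P" "t \<in> {0..1::real}"
  shows "block_det (\<gamma> t) I = 1"
  using pm1_const[of "{0..1}" "\<lambda>t. block_det (\<gamma> t) I" 0 t] assms N0_bdet
  by (auto simp: path_def intro!: continuous_intros)

definition Cset :: "'n rmat set" where
  "Cset = {k. \<exists>\<gamma>. path \<gamma> \<and> \<gamma> 0 = mat 1 \<and> \<gamma> 1 = k \<and> (\<forall>t\<in>{0..1}. \<gamma> t \<in> N0)}"

lemma Cset_mat1: "mat 1 \<in> Cset"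
  unfolding Cset_def
  by (rule CollectI, rule exI[of _ "\<lambda>t. mat 1"]) (simp add: path_def N0_mat1)

lemma Cset_mult: assumes "a \<in> Cset" "b \<in> Cset" shows "a ** b \<in> Cset"
proof -
  obtain \<gamma>1 where g1: "path \<gamma>1" "\<gamma>1 0 = mat 1" "\<gamma>1 1 = a" "\<forall>t\<in>{0..1}. \<gamma>1 t \<in> N0"
    using assms(1) by (auto simp: Cset_def)
  obtain \<gamma>2 where g2: "path \<gamma>2" "\<gamma>2 0 = mat 1" "\<gamma>2 1 = b" "\<forall>t\<in>{0..1}. \<gamma>2 t \<in> N0"
    using assms(2) by (auto simp: Cset_def)
  show ?thesis unfolding Cset_def
  proof (rule CollectI, rule exI[of _ "\<lambda>t. \<gamma>1 t ** \<gamma>2 t"], intro conjI)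
    show "path (\<lambda>t. \<gamma>1 t ** \<gamma>2 t)" using g1(1) g2(1) unfolding path_def by (intro continuous_intros)
  qed (use g1 g2 N0_mult in auto)
qed

lemma Cset_transpose: assumes "a \<in> Cset" shows "transpose a \<in> Cset"
proof -
  obtain \<gamma>1 where g1: "path \<gamma>1" "\<gamma>1 0 = mat 1" "\<gamma>1 1 = a" "\<forall>t\<in>{0..1}. \<gamma>1 t \<in> N0"
    using assms(1) by (auto simp: Cset_def)
  show ?thesis unfolding Cset_def
  proof (rule CollectI, rule exI[of _ "\<lambda>t. transpose (\<gamma>1 t)"], intro conjI)
    show "path (\<lambda>t. transpose (\<gamma>1 t))" using g1(1) unfolding path_def by (intro continuous_intros)
  qed (use g1 N0_transpose in auto)
qed

lemma Cset_N0: "k \<in> Cset \<Longrightarrow> k \<in> N0"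
  by (auto simp: Cset_def)

end


definition rot :: "real^'n \<Rightarrow> real^'n \<Rightarrow> real \<Rightarrow> real^'n^'n" where
  "rot a b \<theta> = (\<chi> c d. (if c = d then 1 else 0) + (cos \<theta> - 1) * (a$c * a$d + b$c * b$d)
       + sin \<theta> * (b$c * a$d - a$c * b$d))"

lemma rot_apply: "rot a b \<theta> *v x = x + ((cos \<theta> - 1) * (a \<bullet> x) - sin \<theta> * (b \<bullet> x)) *\<^sub>R a
    + ((cos \<theta> - 1) * (b \<bullet> x) + sin \<theta> * (a \<bullet> x)) *\<^sub>R b"
proof -
  have "(rot a b \<theta> *v x)$c = x$c + ((cos \<theta> - 1) * (a \<bullet> x) - sin \<theta> * (b \<bullet> x)) * a$c
    + ((cos \<theta> - 1) * (b \<bullet> x) + sin \<theta> * (a \<bullet> x)) * b$c" for c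
  proof -
    have "(rot a b \<theta> *v x)$c = (\<Sum>d\<in>UNIV. (if c = d then x$d else 0)
        + (cos \<theta> - 1) * a$c * (a$d * x$d) + (cos \<theta> - 1) * b$c * (b$d * x$d)
        + sin \<theta> * b$c * (a$d * x$d) - sin \<theta> * a$c * (b$d * x$d))"
      by (simp only: rot_def matrix_vector_mult_def vec_lambda_beta) (rule sum.cong, auto simp: algebra_simps)
    also have "\<dots> = x$c + (cos \<theta> - 1) * a$c * (a \<bullet> x) + (cos \<theta> - 1) * b$c * (b \<bullet> x)
        + sin \<theta> * b$c * (a \<bullet> x) - sin \<theta> * a$c * (b \<bullet> x)"
      by (simp add: sum.distrib sum_subtractf sum_distrib_left[symmetric] inner_vec_def)
    finally show ?thesis by (simp add: algebra_simps)
  qed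
  then show ?thesis by (simp add: vec_eq_iff)
qed

lemma rot_orth:
  assumes a: "norm a = 1" and b: "norm b = 1" and ab: "a \<bullet> b = 0"
  shows "orthogonal_matrix (rot a b \<theta>)"
proof -
  have aa: "a \<bullet> a = 1" and bb: "b \<bullet> b = 1" using a b by (simp_all add: norm_eq_1)
  have ba: "b \<bullet> a = 0" using ab by (simp add: inner_commute)
  have "norm (rot a b \<theta> *v x) = norm x" for x
  proof -
    define p where "p = a \<bullet> x"
    define q where "q = b \<bullet> x"
    define \<alpha> where "\<alpha> = (cos \<theta> - 1) * p - sin \<theta> * q"
    define \<beta> where "\<beta> = (cos \<theta> - 1) * q + sin \<theta> * p"
    have R: "rot a b \<theta> *v x = x + \<alpha> *\<^sub>R a + \<beta> *\<^sub>R b" unfolding rot_apply \<alpha>_def \<beta>_def p_def q_def ..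
    have e1: "(rot a b \<theta> *v x) \<bullet> (rot a b \<theta> *v x) = x \<bullet> x + (2 * \<alpha> * p + 2 * \<beta> * q + \<alpha>^2 + \<beta>^2)"
      unfolding R by (simp add: inner_add_left inner_add_right aa bb ab ba p_def q_def inner_commute
          power2_eq_square algebra_simps)
    have "2 * \<alpha> * p + 2 * \<beta> * q + \<alpha>^2 + \<beta>^2 = (p^2 + q^2) * ((sin \<theta>)^2 + (cos \<theta>)^2 - 1)"
      unfolding \<alpha>_def \<beta>_def power2_eq_square by algebra
    also have "\<dots> = 0" by simp
    finally have "(rot a b \<theta> *v x) \<bullet> (rot a b \<theta> *v x) = x \<bullet> x" using e1 by simp
    then show ?thesis by (simp add: norm_eq_sqrt_inner)
  qed
  then have "orthogonal_transformation (\<lambda>x. rot a b \<theta> *v x)"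
    by (simp add: orthogonal_transformation matrix_vector_mul_linear)
  then show ?thesis
    unfolding orthogonal_transformation_matrix matrix_of_matrix_vector_mul by simp
qed

lemma rot_0: "rot a b 0 = mat 1"
  by (simp add: rot_def mat_def vec_eq_iff)

lemma rot_cont: "continuous_on (S::real set) (\<lambda>t. rot a b (t * \<alpha>))"
  unfolding rot_def by (intro continuous_intros)

lemma rot_a: assumes "a \<bullet> a = 1" "a \<bullet> b = 0"
  shows "rot a b \<theta> *v a = cos \<theta> *\<^sub>R a + sin \<theta> *\<^sub>R b"
  using assms by (simp add: rot_apply inner_commute algebra_simps)

lemma rot_fix: "a \<bullet> x = 0 \<Longrightarrow> b \<bullet> x = 0 \<Longrightarrow> rot a b \<theta> *v x = x"
  by (simp add: rot_apply)

context cp begin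

lemma rot_bdiag: assumes I: "I \<in> P" and sa: "\<And>c. a$c \<noteq> 0 \<Longrightarrow> c \<in> I" and sb: "\<And>c. b$c \<noteq> 0 \<Longrightarrow> c \<in> I"
  shows "bdiag (rot a b \<theta>)"
  unfolding bdiag_def
proof (intro allI impI)
  fix c d assume nz: "rot a b \<theta> $ c $ d \<noteq> 0"
  show "blk c = blk d"
  proof (cases "c = d")
    case False
    then have "(a$c \<noteq> 0 \<or> b$c \<noteq> 0) \<and> (a$d \<noteq> 0 \<or> b$d \<noteq> 0)" using nz by (auto simp: rot_def)
    then have "c \<in> I" "d \<in> I" using sa sb by auto
    then show ?thesis using blk_eq[OF I] by metis
  qed simp
qed

lemma rot_Cset: assumes I: "I \<in> P" and sa: "\<And>c. a$c \<noteq> 0 \<Longrightarrow> c \<in> I" and sb: "\<And>c. b$c \<noteq> 0 \<Longrightarrow> c \<in> I"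
  and a: "norm a = 1" and b: "norm b = 1" and ab: "a \<bullet> b = 0"
  shows "rot a b \<alpha> \<in> Cset"
  unfolding Cset_def
proof (rule CollectI, rule exI[of _ "\<lambda>t. rot a b (t * \<alpha>)"], intro conjI)
  show "path (\<lambda>t. rot a b (t * \<alpha>))" unfolding path_def by (rule rot_cont)
  show "\<forall>t\<in>{0..1}. rot a b (t * \<alpha>) \<in> N0"
    using rot_bdiag[OF I sa sb] rot_orth[OF a b ab] by (simp add: N0_def)
qed (simp_all add: rot_0)

end


lemma orth_inner: "orthogonal_matrix (k::real^'n^'n) \<Longrightarrow> (k *v x) \<bullet> (k *v y) = x \<bullet> y"
  using orth_tr'[of k] unfolding orthogonal_transformation_def by blast

lemma orth_norm: "orthogonal_matrix (k::real^'n^'n) \<Longrightarrow> norm (k *v x) = norm x"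
  using orth_tr'[of k] orthogonal_transformation_norm by blast

context cp begin

definition tp :: "'n \<Rightarrow> 'n" where "tp j = Max (blk j)"

lemma top_in: "tp j \<in> blk j"
  unfolding tp_def using blk_mem[of j] by (intro Max_in) auto

lemma top_cong: "blk c = blk j \<Longrightarrow> tp c = tp j"
  by (simp add: tp_def)

definition Qs :: "'n rmat \<Rightarrow> bool" where "Qs k \<longleftrightarrow> k \<in> N0 \<and> (\<forall>I\<in>P. block_det k I = 1)"

definition Mk :: "'n rmat \<Rightarrow> nat" where "Mk k = card {j. j \<noteq> tp j \<and> k *v axis j 1 \<noteq> axis j 1}"

lemma Q_base: assumes q: "Qs k" and fx: "\<And>j. j \<noteq> tp j \<Longrightarrow> k *v axis j 1 = axis j 1"
  shows "k = mat 1"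
proof -
  have kN: "k \<in> N0" using q by (simp add: Qs_def)
  have b: "bdiag k" and o: "orthogonal_matrix k" using kN by (auto simp: N0_def)
  have colfix: "k$c$j = (if c = j then 1 else 0)" if "j \<noteq> tp j" for c j
    using fx[OF that] by (metis mv_axis ax_nth)
  have offd: "k$c$d = 0" if cd: "c \<noteq> d" for c d
  proof (cases "d = tp d")
    case False then show ?thesis using colfix cd by simp
  next
    case dt: True
    show ?thesis
    proof (cases "blk c = blk d")
      case False then show ?thesis using bdiagD[OF b] by blast
    next
      case True
      then have "tp c = d" using top_cong dt by metis
      then have ct: "c \<noteq> tp c" using cd by simp
      have "(k *v axis d 1) \<bullet> (k *v axis c 1) = axis d 1 \<bullet> (axis c (1::real))" by (rule orth_inner[OF o])
      then have "(k *v axis d 1) \<bullet> axis c 1 = 0" using fx[OF ct] cd by (simp add: inner_axis_axis)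
      then show ?thesis by (simp add: inner_axis)
    qed
  qed
  have diag: "k$m$m = 1" for m
  proof (cases "m = tp m")
    case False then show ?thesis using colfix by simp
  next
    case mt: True
    define I where "I = blk m"
    have I: "I \<in> P" by (simp add: I_def blk_in)
    have "det (emb k I) = (\<Prod>c\<in>UNIV. (emb k I)$c$c)"
      by (rule det_diagonal) (simp add: emb_def offd)
    also have "\<dots> = (\<Prod>c\<in>UNIV. (if c = m then k$m$m else 1))"
    proof (rule prod.cong[OF refl])
      fix c
      show "(emb k I)$c$c = (if c = m then k$m$m else 1)"
      proof (cases "c \<in> I")
        case True
        then have "tp c = m" using top_cong mt I_def blk_eq_iff by metis
        then show ?thesis using True colfix[of c c] by (auto simp: emb_def I_def blk_mem)
      next
        case False then show ?thesis by (auto simp: emb_def I_def blk_mem)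
      qed
    qed
    also have "\<dots> = k$m$m" by (simp add: prod.If_cases)
    finally have "det (emb k I) = k$m$m" .
    moreover have "det (emb k I) = 1" using det_emb[of k I] q I by (simp add: Qs_def)
    ultimately show ?thesis by simp
  qed
  show ?thesis using offd diag by (simp add: vec_eq_iff mat1_nth)
qed

lemma rot_choice:
  assumes v1: "norm v = 1" and vs: "\<And>c. v$c \<noteq> 0 \<Longrightarrow> blk c = blk j" and vne: "v \<noteq> axis j 1"
    and jt: "j \<noteq> tp j"
  shows "\<exists>b \<alpha>. norm b = 1 \<and> v \<bullet> b = 0 \<and> (\<forall>c. b$c \<noteq> 0 \<longrightarrow> blk c = blk j) \<and>
     rot v b \<alpha> *v v = axis j 1 \<and> (\<forall>j'. j' \<noteq> j \<longrightarrow> j' \<noteq> tp j \<longrightarrow> v$j' = 0 \<longrightarrow> b$j' = 0)"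
proof -
  have vv: "v \<bullet> v = 1" using v1 by (simp add: norm_eq_1)
  show ?thesis
  proof (cases "v = - axis j 1")
    case True
    define b where "b = axis (tp j) (1::real)"
    have "norm b = 1" by (simp add: b_def)
    moreover have "v \<bullet> b = 0" using True jt by (simp add: b_def inner_axis_axis)
    moreover have "\<forall>c. b$c \<noteq> 0 \<longrightarrow> blk c = blk j" using top_in blk_eq_iff by (simp add: b_def)
    moreover have "rot v b pi *v v = axis j 1" using rot_a[OF vv \<open>v \<bullet> b = 0\<close>] True by simp
    moreover have "\<forall>j'. j' \<noteq> j \<longrightarrow> j' \<noteq> tp j \<longrightarrow> v$j' = 0 \<longrightarrow> b$j' = 0" by (simp add: b_def)
    ultimately show ?thesis by blast
  next
    case vneg: False
    define c0 where "c0 = v$j"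
    have c0le: "\<bar>c0\<bar> \<le> 1" using component_le_norm_cart[of v j] v1 c0_def by simp
    define w where "w = axis j 1 - c0 *\<^sub>R v"
    have vw: "v \<bullet> w = 0" by (simp add: w_def inner_diff_right vv inner_axis c0_def)
    have ww: "w \<bullet> w = 1 - c0^2"
      by (simp add: w_def inner_diff_left inner_diff_right vv inner_axis inner_axis' c0_def inner_axis_axis
          power2_eq_square inner_commute)
    have wnz: "w \<noteq> 0"
    proof
      assume w0: "w = 0"
      then have "c0^2 = 1" using ww by simp
      then have "c0 = 1 \<or> c0 = -1" by (simp add: power2_eq_1_iff)
      moreover have "axis j 1 = c0 *\<^sub>R v" using w0 by (simp add: w_def)
      ultimately show False using vne vneg by (auto simp: scaleR_left.minus)
    qed
    have nw: "norm w = sqrt (1 - c0^2)" using ww by (simp add: norm_eq_sqrt_inner)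
    define b where "b = (1 / norm w) *\<^sub>R w"
    define \<alpha> where "\<alpha> = arccos c0"
    have ca: "cos \<alpha> = c0" using c0le by (simp add: \<alpha>_def)
    have sa: "sin \<alpha> = norm w" using c0le nw by (simp add: \<alpha>_def sin_arccos)
    have "norm b = 1" using wnz by (simp add: b_def)
    moreover have vb: "v \<bullet> b = 0" using vw by (simp add: b_def)
    moreover have "\<forall>c. b$c \<noteq> 0 \<longrightarrow> blk c = blk j" using vs by (auto simp: b_def w_def)
    moreover have "rot v b \<alpha> *v v = axis j 1"
    proof -
      have "rot v b \<alpha> *v v = c0 *\<^sub>R v + norm w *\<^sub>R b" using rot_a[OF vv vb] ca sa by simp
      also have "norm w *\<^sub>R b = w" using wnz by (simp add: b_def)
      finally show ?thesis by (simp add: w_def)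
    qed
    moreover have "\<forall>j'. j' \<noteq> j \<longrightarrow> j' \<noteq> tp j \<longrightarrow> v$j' = 0 \<longrightarrow> b$j' = 0" by (simp add: b_def w_def)
    ultimately show ?thesis by blast
  qed
qed

lemma Q_step: assumes q: "Qs k" and jt: "j \<noteq> tp j" and ne: "k *v axis j 1 \<noteq> axis j 1"
  shows "\<exists>r. r \<in> Cset \<and> Qs (r ** k) \<and> Mk (r ** k) < Mk k"
proof -
  have kN: "k \<in> N0" using q by (simp add: Qs_def)
  have b: "bdiag k" and o: "orthogonal_matrix k" using kN by (auto simp: N0_def)
  define v where "v = k *v axis j 1"
  have v1: "norm v = 1" using orth_norm[OF o] v_def by simp
  have vs: "\<And>c. v$c \<noteq> 0 \<Longrightarrow> blk c = blk j" using bdiagD[OF b] v_def by simp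
  have vne: "v \<noteq> axis j 1" using ne v_def by simp
  obtain bb \<alpha> where bb: "norm bb = 1" "v \<bullet> bb = 0" "\<forall>c. bb$c \<noteq> 0 \<longrightarrow> blk c = blk j"
      "rot v bb \<alpha> *v v = axis j 1" "\<forall>j'. j' \<noteq> j \<longrightarrow> j' \<noteq> tp j \<longrightarrow> v$j' = 0 \<longrightarrow> bb$j' = 0"
    using rot_choice[OF v1 vs vne jt] by blast
  define r where "r = rot v bb \<alpha>"
  have sa: "\<And>c. v$c \<noteq> 0 \<Longrightarrow> c \<in> blk j" using vs blk_eq_iff by metis
  have sb: "\<And>c. bb$c \<noteq> 0 \<Longrightarrow> c \<in> blk j" using bb(3) blk_eq_iff by metis
  have rC: "r \<in> Cset" unfolding r_def by (rule rot_Cset[OF blk_in sa sb v1 bb(1) bb(2)])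
  have rotN: "rot v bb \<theta> \<in> N0" for \<theta>
    using rot_bdiag[OF blk_in sa sb] rot_orth[OF v1 bb(1) bb(2)] by (simp add: N0_def)
  have Qk': "Qs (r ** k)"
  proof -
    have "r ** k \<in> N0" using N0_mult[OF Cset_N0[OF rC] kN] .
    moreover have "block_det (r ** k) I = 1" if I: "I \<in> P" for I
    proof -
      define \<gamma> where "\<gamma> = (\<lambda>t. rot v bb (t * \<alpha>) ** k)"
      have "path \<gamma>" unfolding path_def \<gamma>_def by (intro continuous_intros rot_cont)
      moreover have "\<forall>t\<in>{0..1}. \<gamma> t \<in> N0" unfolding \<gamma>_def using N0_mult[OF rotN kN] by blast
      moreover have "block_det (\<gamma> 0) I = 1" using q I by (simp add: \<gamma>_def rot_0 Qs_def)
      ultimately have "block_det (\<gamma> 1) I = 1" using path_bdet I by simp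
      then show ?thesis by (simp add: \<gamma>_def r_def)
    qed
    ultimately show ?thesis by (simp add: Qs_def)
  qed
  have sub: "{j'. j' \<noteq> tp j' \<and> (r ** k) *v axis j' 1 \<noteq> axis j' 1} \<subseteq> {j'. j' \<noteq> tp j' \<and> k *v axis j' 1 \<noteq> axis j' 1} - {j}"
  proof (rule subsetI)
    fix j' assume "j' \<in> {j'. j' \<noteq> tp j' \<and> (r ** k) *v axis j' 1 \<noteq> axis j' 1}"
    then have j't: "j' \<noteq> tp j'" and ne': "(r ** k) *v axis j' 1 \<noteq> axis j' 1" by auto
    have rkv: "(r ** k) *v x = r *v (k *v x)" for x by (simp add: matrix_vector_mul_assoc)
    have jj: "j' \<noteq> j"
    proof
      assume jj: "j' = j"
      have "(r ** k) *v axis j' 1 = r *v v" unfolding rkv v_def jj ..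
      then have "(r ** k) *v axis j' 1 = axis j' 1" using bb(4) jj by (simp add: r_def)
      then show False using ne' by simp
    qed
    moreover have "k *v axis j' 1 \<noteq> axis j' 1"
    proof
      assume kj': "k *v axis j' 1 = axis j' 1"
      have "v \<bullet> (k *v axis j' 1) = axis j 1 \<bullet> (axis j' (1::real))" unfolding v_def by (rule orth_inner[OF o])
      then have vj': "v$j' = 0" using kj' jj by (simp add: inner_axis_axis inner_axis)
      have "j' \<noteq> tp j"
      proof
        assume "j' = tp j"
        then have "blk j' = blk j" using top_in blk_eq_iff by metis
        then have "tp j' = tp j" by (rule top_cong)
        then show False using j't \<open>j' = tp j\<close> by simp
      qed
      then have bj': "bb$j' = 0" using bb(5) jj vj' by blast
      have "r *v axis j' 1 = axis j' 1" unfolding r_def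
        by (rule rot_fix) (simp_all add: inner_axis vj' bj')
      then show False using ne' kj' by (simp add: rkv)
    qed
    ultimately show "j' \<in> {j'. j' \<noteq> tp j' \<and> k *v axis j' 1 \<noteq> axis j' 1} - {j}" using j't by simp
  qed
  have "Mk (r ** k) < Mk k" unfolding Mk_def
  proof (rule le_less_trans[OF card_mono[OF _ sub]])
    show "card ({j'. j' \<noteq> tp j' \<and> k *v axis j' 1 \<noteq> axis j' 1} - {j}) < card {j'. j' \<noteq> tp j' \<and> k *v axis j' 1 \<noteq> axis j' 1}"
      using jt ne by (intro psubset_card_mono) auto
  qed simp
  then show ?thesis using rC Qk' by blast
qed

lemma Q_Cset: "Qs k \<Longrightarrow> k \<in> Cset"
proof (induct "Mk k" arbitrary: k rule: less_induct)
  case less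
  show ?case
  proof (cases "\<exists>j. j \<noteq> tp j \<and> k *v axis j 1 \<noteq> axis j 1")
    case True
    then obtain j where j: "j \<noteq> tp j" "k *v axis j 1 \<noteq> axis j 1" by blast
    obtain r where r: "r \<in> Cset" "Qs (r ** k)" "Mk (r ** k) < Mk k" using Q_step[OF less(2) j] by blast
    have k': "r ** k \<in> Cset" using less(1)[OF r(3) r(2)] .
    have o: "orthogonal_matrix r" using Cset_N0[OF r(1)] by (simp add: N0_def)
    have "transpose r ** (r ** k) = k" using orthD1[OF o] by (simp add: matrix_mul_assoc)
    then show ?thesis using Cset_mult[OF Cset_transpose[OF r(1)] k'] by simp
  next
    case False
    then have "k = mat 1" using Q_base[OF less(2)] by blast
    then show ?thesis using Cset_mat1 by simp
  qed
qed

end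


context cp begin

lemma K_Qs: assumes k: "k \<in> K_part P" shows "Qs k"
proof -
  have b: "bdiag k" using k unfolding K_part_def bdiag_def using blk_eq by blast
  have bo: "\<And>I. I \<in> P \<Longrightarrow> block_orthogonal k I" and bd: "\<And>I. I \<in> P \<Longrightarrow> block_det k I = 1"
    using k by (auto simp: K_part_def)
  have "(\<Sum>l\<in>UNIV. k$l$c * k$l$d) = (if c = d then 1 else 0)" for c d
  proof (cases "blk c = blk d")
    case True
    have "(\<Sum>l\<in>UNIV. k$l$c * k$l$d) = (\<Sum>l\<in>blk c. k$l$c * k$l$d)"
    proof (rule sum.mono_neutral_right)
      show "\<forall>l\<in>UNIV - blk c. k$l$c * k$l$d = 0"
        using bdiagD[OF b] blk_eq_iff by fastforce
    qed auto
    also have "\<dots> = (if c = d then 1 else 0)"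
      using bo[OF blk_in[of c]] blk_mem[of c] blk_mem[of d] True
      unfolding block_orthogonal_def by metis
    finally show ?thesis .
  next
    case False
    have "(\<Sum>l\<in>UNIV. k$l$c * k$l$d) = 0"
    proof (rule sum.neutral, rule ballI)
      fix l
      show "k$l$c * k$l$d = 0"
      proof (rule ccontr)
        assume "k$l$c * k$l$d \<noteq> 0"
        then have "blk l = blk c" "blk l = blk d" using bdiagD[OF b] by auto
        then show False using False by simp
      qed
    qed
    then show ?thesis using False by auto
  qed
  then have "transpose k ** k = mat 1" by (simp add: vec_eq_iff mmult_nth mat1_nth transpose_def)
  then have "orthogonal_matrix k" by (simp add: orthogonal_matrix_def matrix_left_right_inverse)
  then show ?thesis using b bd by (simp add: Qs_def N0_def)
qed

lemma SON_bdiag_K: assumes k: "k \<in> SON" "bdiag k" and bd: "\<And>I. I \<in> P \<Longrightarrow> block_det k I = 1"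
  shows "k \<in> K_part P"
proof -
  have o: "orthogonal_matrix k" using k by (simp add: SON_def)
  have kk: "(\<Sum>l\<in>UNIV. k$l$c * k$l$d) = (if c = d then 1 else 0)" for c d
    using orthD1[OF o] by (simp add: vec_eq_iff mmult_nth mat1_nth transpose_def)
  have "block_orthogonal k I" if I: "I \<in> P" for I
    unfolding block_orthogonal_def
  proof (intro ballI)
    fix i j assume i: "i \<in> I" and j: "j \<in> I"
    have "(\<Sum>l\<in>I. k$l$i * k$l$j) = (\<Sum>l\<in>UNIV. k$l$i * k$l$j)"
    proof (rule sum.mono_neutral_left)
      show "\<forall>l\<in>UNIV - I. k$l$i * k$l$j = 0"
      proof
        fix l assume "l \<in> UNIV - I"
        then have "blk l \<noteq> blk i" using blk_eq[OF I i] blk_mem by auto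
        then show "k$l$i * k$l$j = 0" using bdiagD[OF k(2)] by auto
      qed
    qed auto
    then show "(\<Sum>l\<in>I. k$l$i * k$l$j) = (if i = j then 1 else 0)" using kk by simp
  qed
  moreover have "\<forall>i j. k$i$j \<noteq> 0 \<longrightarrow> (\<exists>I\<in>P. i \<in> I \<and> j \<in> I)"
    using bdiagD[OF k(2)] blk_in blk_mem by metis
  ultimately show ?thesis using bd by (simp add: K_part_def)
qed

lemma G_hor_char: "g \<in> G_hor P \<longleftrightarrow> (\<exists>k u. k \<in> SON \<and> bdiag k \<and> unip u \<and> g = k ** u)"
  by (simp only: part1 setmul_def mem_Collect_eq normalizer_char) (auto simp: U_char)

lemma bdet_mult_unip: assumes b: "bdiag k" and u: "unip u" and I: "I \<in> P"
  shows "block_det (k ** u) I = block_det k I"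
proof -
  have ent: "(k ** u)$c$d = k$c$d" if c: "c \<in> I" and d: "d \<in> I" for c d
    unfolding mmult_nth
  proof (subst sum_only[of d])
    fix e assume ed: "e \<noteq> d"
    show "k$c$e * u$e$d = 0"
    proof (cases "k$c$e = 0")
      case False
      then have "blk c = blk e" using bdiagD[OF b] by blast
      then have "blk e = blk d" using blk_eq[OF I c] blk_eq[OF I d] by simp
      then have "\<not> bef e d" using bef_neq by blast
      then show ?thesis using unipD2[OF u, of e d] ed by auto
    qed simp
  qed (simp add: unipD1[OF u])
  show ?thesis unfolding block_det_def
  proof (rule sum.cong[OF refl])
    fix p assume "p \<in> {p. p permutes I}"
    then have p: "p permutes I" by simp
    have "(\<Prod>i\<in>I. (k ** u)$i$p i) = (\<Prod>i\<in>I. k$i$p i)"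
      by (rule prod.cong[OF refl]) (use ent permutes_in_image[OF p] in auto)
    then show "of_int (sign p) * (\<Prod>i\<in>I. (k ** u)$i$p i) = of_int (sign p) * (\<Prod>i\<in>I. k$i$p i)" by simp
  qed
qed

lemma bdet_mat1: "block_det (mat 1) I = 1"
proof -
  have "emb (mat 1) I = mat 1" by (simp add: emb_def mat_def vec_eq_iff)
  then show ?thesis using det_emb[of "mat 1" I] by simp
qed

lemma part2: "connected_component_set (G_hor P) (mat 1) = setmul (K_part P) (U_part P)"
proof
  show "connected_component_set (G_hor P) (mat 1) \<subseteq> setmul (K_part P) (U_part P)"
  proof
    fix g assume "g \<in> connected_component_set (G_hor P) (mat 1)"
    then obtain T where T: "connected T" "T \<subseteq> G_hor P" "mat 1 \<in> T" "g \<in> T"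
      by (auto simp: connected_component_def)
    obtain k u where ku: "k \<in> SON" "bdiag k" "unip u" "g = k ** u"
      using G_hor_char T by blast
    have kN: "k \<in> N0" using ku by (simp add: N0_def SON_def)
    have "block_det k I = 1" if I: "I \<in> P" for I
    proof -
      have pm: "\<forall>x\<in>T. block_det x I = 1 \<or> block_det x I = -1"
      proof
        fix x assume "x \<in> T"
        then obtain k' u' where "k' \<in> SON" "bdiag k'" "unip u'" "x = k' ** u'"
          using G_hor_char T by blast
        then show "block_det x I = 1 \<or> block_det x I = -1"
          using bdet_mult_unip I N0_bdet by (simp add: N0_def SON_def)
      qed
      have "block_det g I = 1"
        by (rule pm1_const[OF T(1) _ pm T(3) bdet_mat1 T(4)]) (intro continuous_intros)
      then show ?thesis using bdet_mult_unip[OF ku(2) ku(3) I] ku(4) by simp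
    qed
    then have "k \<in> K_part P" using SON_bdiag_K ku by blast
    then show "g \<in> setmul (K_part P) (U_part P)"
      unfolding setmul_def U_char using ku by blast
  qed
next
  show "setmul (K_part P) (U_part P) \<subseteq> connected_component_set (G_hor P) (mat 1)"
  proof
    fix g assume "g \<in> setmul (K_part P) (U_part P)"
    then obtain k u where k: "k \<in> K_part P" and u: "unip u" and g: "g = k ** u"
      unfolding setmul_def U_char by blast
    have "k \<in> Cset" using Q_Cset[OF K_Qs[OF k]] .
    then obtain \<gamma> where \<gamma>: "path \<gamma>" "\<gamma> 0 = mat 1" "\<gamma> 1 = k" "\<forall>t\<in>{0..1}. \<gamma> t \<in> N0"
      by (auto simp: Cset_def)
    define \<delta> where "\<delta> = (\<lambda>t. \<gamma> t ** (mat 1 + t *\<^sub>R (u - mat 1)))"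
    have pd: "path \<delta>" using \<gamma>(1) unfolding path_def \<delta>_def by (intro continuous_intros)
    have sub: "path_image \<delta> \<subseteq> G_hor P"
    proof
      fix x assume "x \<in> path_image \<delta>"
      then obtain t where t: "t \<in> {0..1}" "x = \<delta> t" by (auto simp: path_image_def)
      have "det (\<gamma> t) = 1" using path_det[OF \<gamma>(1) \<gamma>(4) _ t(1)] \<gamma>(2) by simp
      then have "\<gamma> t \<in> SON" "bdiag (\<gamma> t)" using \<gamma>(4) t(1) by (auto simp: SON_def N0_def)
      then show "x \<in> G_hor P" unfolding G_hor_char using unip_segment[OF u] t(2) \<delta>_def by blast
    qed
    have "\<delta> 0 = mat 1" "\<delta> 1 = g" using \<gamma> g by (simp_all add: \<delta>_def)
    then have "mat 1 \<in> path_image \<delta>" "g \<in> path_image \<delta>"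
      using pathstart_in_path_image[of \<delta>] pathfinish_in_path_image[of \<delta>]
      by (auto simp: pathstart_def pathfinish_def)
    then show "g \<in> connected_component_set (G_hor P) (mat 1)"
      unfolding mem_Collect_eq connected_component_def
      using connected_path_image[OF pd] sub by blast
  qed
qed

end

theorem lemma4p1:
  fixes P :: "('n::{finite,linorder}) set set"
  assumes "CARD('n) \<ge> 2"
    and "consecutive_partition P"
  shows "G_hor P = setmul (normalizer_K (U_part P)) (U_part P)
         \<and> connected_component_set (G_hor P) (mat 1) = setmul (K_part P) (U_part P)"
proof -
  interpret cp P by (rule cp.intro) (rule assms(2))
  show ?thesis using part1 part2 by simp
qed


end
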